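(* Let $N=(P,T;F)$ be a finite Petri net without isolated elements (every place and transition is incident to some arc), with $T=\{t_1,\dots,t_n\}$. Let $A_0=E$ be the empty module and, for $i=1,\dots,n$, let $A_i = A_{i-1}\bullet[t_i]$ (taking a copy of $[t_i]$ whose node set is disjoint from that of $A_{i-1}$). Then $A_n$ is isomorphic to $[N]$.
   Context: An alphabet $\Sigma$ is a finite set of labels. An interface over $\Sigma$ is a finite set $R$ in which every element carries a label from $\Sigma$ and a positive integer index, such that for each label $l$, if $R$ contains exactly $k$ elements labeled $l$, these carry the indices $1,\dots,k$. A module $G$ over $\Sigma$ is a finite directed graph $(V,E)$ together with two interfaces over $\Sigma$, the left interface ${}^*G\subseteq V$ and the right interface $G^*\subseteq V$ (not necessarily disjoint). Two modules are isomorphic if there is a bijection between their node sets preserving edges, interface membership, labels, and indices. The empty module $E$ has no nodes, no edges, and empty interfaces. Harmonic pairs: for disjoint interfaces $R,S$, elements $r\in R$, $s\in S$ form a harmonic pair $\{r,s\}$ if they have the same label and the same index (in $R$ resp. $S$). Composition: let $A,B$ be modules with disjoint node sets. For each node $x$ of $A$ or $B$ put $x'=\{x,y\}$ if $\{x,y\}$ is a harmonic pair of $A^*$ and ${}^*B$, and $x'=x$ otherwise. For a label $l$ let $m_l$ be the number of $l$-labeled harmonic pairs of $A^*$ and ${}^*B$. $A\bullet B$ has nodes all $x'$ and edges all $(x',z')$ with $(x,z)$ an edge of $A$ or $B$. Left interface: each $x\in{}^*A$ with label $l$, index $n$ gives $x'$ with label $l$, index $n$; each $x\in{}^*B$ without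 harmonic partner in $A^*$, with label $l$ and index $n$ in ${}^*B$, belongs with index $p+n-m_l$, $p$ the number of $l$-labeled elements of ${}^*A$. Right interface: each $x\in B^*$ with label $l$, index $n$ gives $x'$ with label $l$, index $n$; each $x\in A^*$ without harmonic partner in ${}^*B$, with label $l$ and index $n$ in $A^*$, belongs with index $q+n-m_l$, $q$ the number of $l$-labeled elements of $B^*$. Transition atoms: for a net $N=(P,T;F)$ with presets ${}^\bullet t$ and postsets $t^\bullet$, and $t\in T$, the module $[t]$ has node set ${}^\bullet t\cup t^\bullet\cup\{t\}$, edge set $({}^\bullet t\times\{t\})\cup(\{t\}\times t^\bullet)$, and both interfaces equal to ${}^\bullet t\cup t^\bullet$, where each interface place is labeled by its own identity (the alphabet is $P$; hence all indices are $1$). The module $[N]$ is the graph $(P\cup T, F)$ with both interfaces equal to $P$, each place labeled by its own identity. *)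

theory Defs
  imports Main "HOL-Library.FSet"
begin

text \<open>Node type closed under the composition construction: a node of a
composed module is the (finite) set of the nodes it arises from.  Unmatched
nodes x become Merge {|x|}, harmonic pairs x,y become Merge {|x,y|}; this is
an injective renaming of the paper's convention (x' = x resp. x' = {x,y}).\<close>

datatype 'a node = Atom 'a | Merge "'a node fset"

text \<open>An interface is encoded as a partial map from nodes to (label, index);
its domain is the interface.\<close>

record ('v, 'l) pmodule =
  nodes :: "'v set"
  edges :: "('v \<times> 'v) set"
  lif   :: "'v \<Rightarrow> ('l \<times> nat) option"
  rif   :: "'v \<Rightarrow> ('l \<times> nat) option"

definition labelled :: "('v \<Rightarrow> ('l \<times> nat) option) \<Rightarrow> 'l \<Rightarrow> 'v set" where
  "labelled f l = {x. \<exists>n. f x = Some (l, n)}"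

definition idx :: "('v \<Rightarrow> ('l \<times> nat) option) \<Rightarrow> 'v \<Rightarrow> nat" where
  "idx f x = snd (the (f x))"

definition is_interface :: "'v set \<Rightarrow> ('v \<Rightarrow> ('l \<times> nat) option) \<Rightarrow> bool" where
  "is_interface V f \<longleftrightarrow> finite (dom f) \<and> dom f \<subseteq> V \<and>
     (\<forall>l. idx f ` labelled f l = {1..card (labelled f l)})"

definition is_module :: "('v, 'l) pmodule \<Rightarrow> bool" where
  "is_module G \<longleftrightarrow> finite (nodes G) \<and> edges G \<subseteq> nodes G \<times> nodes G \<and>
     is_interface (nodes G) (lif G) \<and> is_interface (nodes G) (rif G)"

definition mod_iso :: "('v, 'l) pmodule \<Rightarrow> ('w, 'l) pmodule \<Rightarrow> bool" where
  "mod_iso G H \<longleftrightarrow> is_module G \<and> is_module H \<and>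
     (\<exists>h. bij_betw h (nodes G) (nodes H) \<and>
          edges H = (\<lambda>(x, y). (h x, h y)) ` edges G \<and>
          (\<forall>x\<in>nodes G. lif H (h x) = lif G x \<and> rif H (h x) = rif G x))"

definition empty_module :: "('v, 'l) pmodule" where
  "empty_module = \<lparr>nodes = {}, edges = {}, lif = Map.empty, rif = Map.empty\<rparr>"

definition harmonic :: "('v, 'l) pmodule \<Rightarrow> ('v, 'l) pmodule \<Rightarrow> 'v \<Rightarrow> 'v \<Rightarrow> bool" where
  "harmonic A B x y \<longleftrightarrow> rif A x \<noteq> None \<and> rif A x = lif B y"

definition prm :: "('a node, 'l) pmodule \<Rightarrow> ('a node, 'l) pmodule \<Rightarrow> 'a node \<Rightarrow> 'a node" where
  "prm A B x = (if \<exists>y. harmonic A B x y \<or> harmonic A B y x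
     then Merge {|x, SOME y. harmonic A B x y \<or> harmonic A B y x|}
     else Merge {|x|})"

definition mcount :: "('v, 'l) pmodule \<Rightarrow> ('v, 'l) pmodule \<Rightarrow> 'l \<Rightarrow> nat" where
  "mcount A B l = card {(x, y). harmonic A B x y \<and> x \<in> labelled (rif A) l}"

definition compose :: "('a node, 'l) pmodule \<Rightarrow> ('a node, 'l) pmodule \<Rightarrow> ('a node, 'l) pmodule"
  (infixl "\<bullet>" 70) where
  "A \<bullet> B = \<lparr>nodes = prm A B ` (nodes A \<union> nodes B),
     edges = (\<lambda>(x, z). (prm A B x, prm A B z)) ` (edges A \<union> edges B),
     lif = (\<lambda>v.
        if \<exists>x\<in>dom (lif A). prm A B x = v
        then lif A (SOME x. x \<in> dom (lif A) \<and> prm A B x = v)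
        else if \<exists>x\<in>dom (lif B). (\<nexists>y. harmonic A B y x) \<and> prm A B x = v
        then (case lif B (SOME x. x \<in> dom (lif B) \<and> (\<nexists>y. harmonic A B y x) \<and> prm A B x = v) of
                None \<Rightarrow> None
              | Some (l, n) \<Rightarrow> Some (l, card (labelled (lif A) l) + n - mcount A B l))
        else None),
     rif = (\<lambda>v.
        if \<exists>x\<in>dom (rif B). prm A B x = v
        then rif B (SOME x. x \<in> dom (rif B) \<and> prm A B x = v)
        else if \<exists>x\<in>dom (rif A). (\<nexists>y. harmonic A B x y) \<and> prm A B x = v
        then (case rif A (SOME x. x \<in> dom (rif A) \<and> (\<nexists>y. harmonic A B x y) \<and> prm A B x = v) of
                None \<Rightarrow> None
              | Some (l, n) \<Rightarrow> Some (l, card (labelled (rif B) l) + n - mcount A B l))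
        else None)\<rparr>"

definition is_net :: "'x set \<Rightarrow> 'x set \<Rightarrow> ('x \<times> 'x) set \<Rightarrow> bool" where
  "is_net P T F \<longleftrightarrow> P \<inter> T = {} \<and> F \<subseteq> (P \<times> T) \<union> (T \<times> P)"

definition no_isolated :: "'x set \<Rightarrow> 'x set \<Rightarrow> ('x \<times> 'x) set \<Rightarrow> bool" where
  "no_isolated P T F \<longleftrightarrow> (\<forall>x\<in>P \<union> T. \<exists>y. (x, y) \<in> F \<or> (y, x) \<in> F)"

definition preset :: "('x \<times> 'x) set \<Rightarrow> 'x \<Rightarrow> 'x set" where
  "preset F t = {p. (p, t) \<in> F}"

definition postset :: "('x \<times> 'x) set \<Rightarrow> 'x \<Rightarrow> 'x set" where
  "postset F t = {p. (t, p) \<in> F}"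

definition trans_atom :: "('x \<times> 'x) set \<Rightarrow> 'x \<Rightarrow> ('x, 'x) pmodule" where
  "trans_atom F t =
    (let I = preset F t \<union> postset F t in
     \<lparr>nodes = I \<union> {t},
      edges = (preset F t \<times> {t}) \<union> ({t} \<times> postset F t),
      lif = (\<lambda>x. if x \<in> I then Some (x, 1) else None),
      rif = (\<lambda>x. if x \<in> I then Some (x, 1) else None)\<rparr>)"

definition net_module :: "'x set \<Rightarrow> 'x set \<Rightarrow> ('x \<times> 'x) set \<Rightarrow> ('x, 'x) pmodule" where
  "net_module P T F =
     \<lparr>nodes = P \<union> T, edges = F,
      lif = (\<lambda>x. if x \<in> P then Some (x, 1) else None),
      rif = (\<lambda>x. if x \<in> P then Some (x, 1) else None)\<rparr>"

end

theory Submission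
  imports Defs
begin


definition rep :: "('v, 'l) pmodule \<Rightarrow> ('v \<Rightarrow> 'l) \<Rightarrow> 'l set \<Rightarrow> ('l \<times> 'l) set \<Rightarrow> 'l set \<Rightarrow> bool" where
  "rep M h V E I \<longleftrightarrow> bij_betw h (nodes M) V \<and> edges M \<subseteq> nodes M \<times> nodes M \<and>
     (\<lambda>(x, y). (h x, h y)) ` edges M = E \<and>
     (\<forall>x. lif M x = (if x \<in> nodes M \<and> h x \<in> I then Some (h x, 1) else None)) \<and>
     (\<forall>x. rif M x = (if x \<in> nodes M \<and> h x \<in> I then Some (h x, 1) else None))"

definition tmod :: "'x set \<Rightarrow> ('x \<times> 'x) set \<Rightarrow> 'x set \<Rightarrow> ('x, 'x) pmodule" where
  "tmod V E I = \<lparr>nodes = V, edges = E,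
      lif = (\<lambda>x. if x \<in> I then Some (x, 1) else None),
      rif = (\<lambda>x. if x \<in> I then Some (x, 1) else None)\<rparr>"

lemma iface_lemma:
  assumes "inj_on k D" "finite D" "D \<subseteq> V" "\<And>x. f x = (if x \<in> D then Some (k x, 1) else None)"
  shows "is_interface V f"
proof -
  have dom: "dom f = D" using assms(4) by (auto simp: dom_def)
  have lab: "labelled f l = {x\<in>D. k x = l}" for l using assms(4) by (auto simp: labelled_def)
  have "idx f ` labelled f l = {1..card (labelled f l)}" for l
  proof (cases "\<exists>x\<in>D. k x = l")
    case True
    then obtain a where a: "a \<in> D" "k a = l" by blast
    then have "{x\<in>D. k x = l} = {a}" using assms(1) by (auto simp: inj_on_def)
    then show ?thesis using lab a assms(4) by (simp add: idx_def)
  next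
    case False
    then have e: "{x\<in>D. k x = l} = {}" by auto
    show ?thesis by (simp add: lab e)
  qed
  then show ?thesis using dom assms by (simp add: is_interface_def)
qed

lemma rep_iso:
  assumes r: "rep M h V E I" and fin: "finite V" and EV: "E \<subseteq> V \<times> V" and IV: "I \<subseteq> V"
  shows "mod_iso M (tmod V E I)"
proof -
  have bij: "bij_betw h (nodes M) V" using r by (simp add: rep_def)
  have finM: "finite (nodes M)" using bij fin bij_betw_finite by blast
  have injD: "inj_on h {x\<in>nodes M. h x \<in> I}" using bij by (auto simp: bij_betw_def inj_on_def)
  have "is_module M"
    unfolding is_module_def
    using r finM
    by (auto simp: rep_def intro!: iface_lemma[OF injD])
  moreover have "is_module (tmod V E I)"
    unfolding is_module_def tmod_def
    using fin EV IV finite_subset[OF IV fin]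
    by (auto intro!: iface_lemma[of id I])
  moreover have "\<forall>x\<in>nodes M. lif (tmod V E I) (h x) = lif M x \<and> rif (tmod V E I) (h x) = rif M x"
    using r by (simp add: rep_def tmod_def)
  ultimately show ?thesis using r unfolding mod_iso_def by (auto simp: rep_def tmod_def)
qed

lemma iso_rep:
  assumes m: "mod_iso M (tmod V E I)"
  shows "\<exists>h. rep M h V E I"
proof -
  from m obtain h where h: "bij_betw h (nodes M) V" "E = (\<lambda>(x, y). (h x, h y)) ` edges M"
     "\<forall>x\<in>nodes M. lif (tmod V E I) (h x) = lif M x \<and> rif (tmod V E I) (h x) = rif M x"
    and mM: "is_module M"
    unfolding mod_iso_def by (auto simp: tmod_def)
  have "lif M x = (if x \<in> nodes M \<and> h x \<in> I then Some (h x, 1) else None)" for x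
  proof (cases "x \<in> nodes M")
    case True then show ?thesis using h(3) by (auto simp: tmod_def)
  next
    case False then have "x \<notin> dom (lif M)" using mM by (auto simp: is_module_def is_interface_def)
    then show ?thesis using False by auto
  qed
  moreover have "rif M x = (if x \<in> nodes M \<and> h x \<in> I then Some (h x, 1) else None)" for x
  proof (cases "x \<in> nodes M")
    case True then show ?thesis using h(3) by (auto simp: tmod_def)
  next
    case False then have "x \<notin> dom (rif M)" using mM by (auto simp: is_module_def is_interface_def)
    then show ?thesis using False by auto
  qed
  ultimately have "rep M h V E I" using h mM by (auto simp: rep_def is_module_def)
  then show ?thesis by blast
qed



lemma compose_rep:
  assumes rA: "rep A h1 V1 E1 I1" and rB: "rep B h2 V2 E2 I2"
    and fin1: "finite V1" and fin2: "finite V2" and I1V: "I1 \<subseteq> V1" and I2V: "I2 \<subseteq> V2"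
    and disj: "nodes A \<inter> nodes B = {}"
    and share: "V1 \<inter> V2 \<subseteq> I1 \<inter> I2"
  shows "\<exists>h. rep (A \<bullet> B) h (V1 \<union> V2) (E1 \<union> E2) (I1 \<union> I2)"
proof -
  let ?U = "nodes A \<union> nodes B"
  have b1: "bij_betw h1 (nodes A) V1" and b2: "bij_betw h2 (nodes B) V2"
    using rA rB by (auto simp: rep_def)
  have lA: "lif A x = (if x \<in> nodes A \<and> h1 x \<in> I1 then Some (h1 x, 1) else None)" for x
    using rA by (simp add: rep_def)
  have rA': "rif A x = (if x \<in> nodes A \<and> h1 x \<in> I1 then Some (h1 x, 1) else None)" for x
    using rA by (simp add: rep_def)
  have lB: "lif B x = (if x \<in> nodes B \<and> h2 x \<in> I2 then Some (h2 x, 1) else None)" for x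
    using rB by (simp add: rep_def)
  have rB': "rif B x = (if x \<in> nodes B \<and> h2 x \<in> I2 then Some (h2 x, 1) else None)" for x
    using rB by (simp add: rep_def)
  have finA: "finite (nodes A)" using b1 fin1 bij_betw_finite by blast
  have finB: "finite (nodes B)" using b2 fin2 bij_betw_finite by blast
  have i1: "inj_on h1 (nodes A)" and i2: "inj_on h2 (nodes B)"
    using b1 b2 by (auto simp: bij_betw_def)
  have im1: "h1 ` nodes A = V1" and im2: "h2 ` nodes B = V2" using b1 b2 by (auto simp: bij_betw_def)
  have harm: "harmonic A B x y \<longleftrightarrow> x \<in> nodes A \<and> y \<in> nodes B \<and> h1 x \<in> I1 \<and> h2 y \<in> I2 \<and> h1 x = h2 y" for x y
    by (auto simp: harmonic_def rA' lB)
  define g where "g x = (if x \<in> nodes A then h1 x else h2 x)" for x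
  have gA: "x \<in> nodes A \<Longrightarrow> g x = h1 x" for x by (simp add: g_def)
  have gB: "x \<in> nodes B \<Longrightarrow> g x = h2 x" for x using disj by (auto simp: g_def)
  define S where "S w = {y \<in> ?U. g y = w}" for w
  have finS: "finite (S w)" for w using finA finB by (auto simp: S_def)
  have prm: "prm A B x = Merge (Abs_fset (S (g x)))" if xU: "x \<in> ?U" for x
  proof (cases "x \<in> nodes A")
    case xA: True
    then have xB: "x \<notin> nodes B" using disj by auto
    show ?thesis
    proof (cases "h1 x \<in> V2")
      case True
      define y where "y = inv_into (nodes B) h2 (h1 x)"
      have yB: "y \<in> nodes B" and hy: "h2 y = h1 x" using True im2 unfolding y_def
        by (auto intro: inv_into_into f_inv_into_f)
      have hx1: "h1 x \<in> V1" using xA im1 by auto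
      have hI: "h1 x \<in> I1" "h1 x \<in> I2" using share hx1 True by auto
      have H: "harmonic A B x z \<or> harmonic A B z x \<longleftrightarrow> z = y" for z
        using xB xA yB hy hI inj_onD[OF i2, of z y] by (auto simp: harm)
      then have ex: "\<exists>z. harmonic A B x z \<or> harmonic A B z x" by blast
      have sm: "(SOME z. harmonic A B x z \<or> harmonic A B z x) = y" using H by simp
      have "S (g x) = {x, y}"
        using xA yB hy i1 i2 disj by (auto simp: S_def g_def inj_on_def image_iff; metis)
      then have "Abs_fset (S (g x)) = {|x, y|}"
        by (metis (no_types) fset_inverse fset_simps(1) fset_simps(2))
      then show ?thesis unfolding prm_def using ex sm by simp
    next
      case False
      have H: "\<not> (harmonic A B x z \<or> harmonic A B z x)" for z
        using xB False by (force simp: harm im2[symmetric])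
      have "S (g x) = {x}"
        using xA False im2 i1 disj by (auto simp: S_def g_def inj_on_def image_iff; metis)
      then have "Abs_fset (S (g x)) = {|x|}"
        by (metis (no_types) fset_inverse fset_simps(1) fset_simps(2))
      then show ?thesis unfolding prm_def using H by simp
    qed
  next
    case xnA: False
    then have xB: "x \<in> nodes B" using xU by auto
    show ?thesis
    proof (cases "h2 x \<in> V1")
      case True
      define y where "y = inv_into (nodes A) h1 (h2 x)"
      have yA: "y \<in> nodes A" and hy: "h1 y = h2 x" using True im1 unfolding y_def
        by (auto intro: inv_into_into f_inv_into_f)
      have hx2: "h2 x \<in> V2" using xB im2 by auto
      have hI: "h2 x \<in> I1" "h2 x \<in> I2" using share hx2 True by auto
      have H: "harmonic A B x z \<or> harmonic A B z x \<longleftrightarrow> z = y" for z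
        using xB xnA yA hy hI inj_onD[OF i1, of z y] by (auto simp: harm)
      then have ex: "\<exists>z. harmonic A B x z \<or> harmonic A B z x" by blast
      have sm: "(SOME z. harmonic A B x z \<or> harmonic A B z x) = y" using H by simp
      have "S (g x) = {x, y}"
        using xnA xB yA hy i1 i2 disj by (auto simp: S_def g_def inj_on_def image_iff; metis)
      then have "Abs_fset (S (g x)) = {|x, y|}"
        by (metis (no_types) fset_inverse fset_simps(1) fset_simps(2))
      then show ?thesis unfolding prm_def using ex sm by simp
    next
      case False
      have H: "\<not> (harmonic A B x z \<or> harmonic A B z x)" for z
        using xnA False by (force simp: harm im1[symmetric])
      have "S (g x) = {x}"
        using xnA xB False im1 i2 disj by (auto simp: S_def g_def inj_on_def image_iff; metis)
      then have "Abs_fset (S (g x)) = {|x|}"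
        by (metis (no_types) fset_inverse fset_simps(1) fset_simps(2))
      then show ?thesis unfolding prm_def using H by simp
    qed
  qed
  have gU: "g ` ?U = V1 \<union> V2" using im1 im2 disj by (force simp: g_def)
  define q where "q w = Merge (Abs_fset (S w))" for w
  have qinj: "inj_on q (V1 \<union> V2)"
  proof (rule inj_onI)
    fix w w' assume w: "w \<in> V1 \<union> V2" and "q w = q w'"
    then have "Abs_fset (S w) = Abs_fset (S w')" by (simp add: q_def)
    then have "S w = S w'" using finS by (simp add: Abs_fset_inject)
    moreover obtain y where "y \<in> ?U" "g y = w" using w gU by force
    ultimately show "w = w'" by (auto simp: S_def)
  qed
  have prmq: "x \<in> ?U \<Longrightarrow> prm A B x = q (g x)" for x using prm by (simp add: q_def)
  have nodesC: "nodes (A \<bullet> B) = q ` (V1 \<union> V2)"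
  proof -
    have "nodes (A \<bullet> B) = prm A B ` ?U" by (simp add: compose_def)
    also have "\<dots> = q ` g ` ?U" using prmq by (auto simp: image_iff)
    finally show ?thesis using gU by simp
  qed
  have bq: "bij_betw q (V1 \<union> V2) (nodes (A \<bullet> B))" using qinj nodesC by (simp add: bij_betw_def)
  define h where "h = inv_into (V1 \<union> V2) q"
  have bh: "bij_betw h (nodes (A \<bullet> B)) (V1 \<union> V2)" unfolding h_def by (rule bij_betw_inv_into[OF bq])
  have gV: "x \<in> ?U \<Longrightarrow> g x \<in> V1 \<union> V2" for x using gU by blast
  have hprm: "x \<in> ?U \<Longrightarrow> h (prm A B x) = g x" for x
    using prmq gV qinj by (simp add: h_def)
  have prm_eq: "x \<in> ?U \<Longrightarrow> z \<in> ?U \<Longrightarrow> prm A B x = prm A B z \<longleftrightarrow> g x = g z" for x z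
    using prmq gV qinj by (metis inj_onD)
  have prmN: "x \<in> ?U \<Longrightarrow> prm A B x \<in> nodes (A \<bullet> B)" for x by (simp add: compose_def)
  have nodesE: "v \<in> nodes (A \<bullet> B) \<Longrightarrow> \<exists>x\<in>?U. v = prm A B x" for v by (auto simp: compose_def)
  have eA: "edges A \<subseteq> nodes A \<times> nodes A" and eB: "edges B \<subseteq> nodes B \<times> nodes B"
    using rA rB by (auto simp: rep_def)
  have edgesub: "edges (A \<bullet> B) \<subseteq> nodes (A \<bullet> B) \<times> nodes (A \<bullet> B)"
    using eA eB prmN by (auto simp: compose_def)
  have edgeim: "(\<lambda>(x, y). (h x, h y)) ` edges (A \<bullet> B) = E1 \<union> E2"
  proof -
    have "(\<lambda>(x, y). (h x, h y)) ` edges (A \<bullet> B) =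
          (\<lambda>(x, y). (h (prm A B x), h (prm A B y))) ` (edges A \<union> edges B)"
      by (simp add: compose_def image_image case_prod_beta)
    also have "\<dots> = (\<lambda>(x, y). (h1 x, h1 y)) ` edges A \<union> (\<lambda>(x, y). (h2 x, h2 y)) ` edges B"
    proof -
      have 1: "(\<lambda>(x, y). (h (prm A B x), h (prm A B y))) ` edges A = (\<lambda>(x, y). (h1 x, h1 y)) ` edges A"
        using eA hprm gA by (intro image_cong) force+
      have 2: "(\<lambda>(x, y). (h (prm A B x), h (prm A B y))) ` edges B = (\<lambda>(x, y). (h2 x, h2 y)) ` edges B"
        using eB hprm gB by (intro image_cong) force+
      show ?thesis using 1 2 by (simp add: image_Un)
    qed
    finally show ?thesis using rA rB by (simp add: rep_def)
  qed
  have labA_empty: "w \<notin> I1 \<Longrightarrow> labelled (lif A) w = {}" "w \<notin> I1 \<Longrightarrow> labelled (rif A) w = {}" for w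
    by (auto simp: labelled_def lA rA')
  have labB_empty: "w \<notin> I2 \<Longrightarrow> labelled (lif B) w = {}" "w \<notin> I2 \<Longrightarrow> labelled (rif B) w = {}" for w
    by (auto simp: labelled_def lB rB')
  have mc1: "w \<notin> I1 \<Longrightarrow> mcount A B w = 0" for w by (simp add: mcount_def labA_empty)
  have mc2: "w \<notin> I2 \<Longrightarrow> mcount A B w = 0" for w
  proof -
    assume w: "w \<notin> I2"
    have e: "{(x, y). harmonic A B x y \<and> x \<in> labelled (rif A) w} = {}"
      using w by (auto simp: harm labelled_def rA' split: if_splits)
    show "mcount A B w = 0" unfolding mcount_def e by simp
  qed
  have nodesG: "\<exists>x0\<in>?U. v = prm A B x0 \<and> h v = g x0" if "v \<in> nodes (A \<bullet> B)" for v
  proof -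
    from nodesE[OF that] obtain x0 where "x0 \<in> ?U" "v = prm A B x0" by blast
    then show ?thesis using hprm[of x0] by auto
  qed
  have c1: "(\<exists>x\<in>dom (lif A). prm A B x = v) \<longleftrightarrow> v \<in> nodes (A \<bullet> B) \<and> h v \<in> I1" for v
  proof
    assume "\<exists>x\<in>dom (lif A). prm A B x = v"
    then obtain x where "x \<in> nodes A" "h1 x \<in> I1" "v = prm A B x" by (auto simp: lA split: if_splits)
    then show "v \<in> nodes (A \<bullet> B) \<and> h v \<in> I1" using prmN[of x] hprm[of x] gA[of x] by simp
  next
    assume vh: "v \<in> nodes (A \<bullet> B) \<and> h v \<in> I1"
    obtain x0 where x0': "x0 \<in> ?U" "v = prm A B x0" "h v = g x0" using nodesG[of v] vh by blast
    then have x0: "x0 \<in> ?U" "v = prm A B x0" "g x0 \<in> I1" using vh by auto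
    then obtain x where x: "x \<in> nodes A" "h1 x = g x0" using I1V im1 by force
    then have "prm A B x = v" using prm_eq[of x x0] x0 gA[of x] by simp
    then show "\<exists>x\<in>dom (lif A). prm A B x = v" using x x0 by (auto simp: lA)
  qed
  have c2: "\<not> (\<exists>x\<in>dom (lif A). prm A B x = v) \<Longrightarrow>
     (\<exists>x\<in>dom (lif B). (\<nexists>y. harmonic A B y x) \<and> prm A B x = v) \<longleftrightarrow> v \<in> nodes (A \<bullet> B) \<and> h v \<in> I2" for v
  proof
    assume "\<exists>x\<in>dom (lif B). (\<nexists>y. harmonic A B y x) \<and> prm A B x = v"
    then obtain x where "x \<in> nodes B" "h2 x \<in> I2" "v = prm A B x" by (auto simp: lB split: if_splits)
    then show "v \<in> nodes (A \<bullet> B) \<and> h v \<in> I2" using prmN[of x] hprm[of x] gB[of x] by simp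
  next
    assume n1: "\<not> (\<exists>x\<in>dom (lif A). prm A B x = v)" and vh: "v \<in> nodes (A \<bullet> B) \<and> h v \<in> I2"
    then have hv: "h v \<notin> I1" using c1 by blast
    obtain x0 where x0': "x0 \<in> ?U" "v = prm A B x0" "h v = g x0" using nodesG[of v] vh by blast
    then have x0: "x0 \<in> ?U" "v = prm A B x0" "g x0 \<in> I2" "h v = g x0" using vh by auto
    then obtain x where x: "x \<in> nodes B" "h2 x = g x0" using I2V im2 by force
    then have "prm A B x = v" using prm_eq[of x x0] x0 gB[of x] by simp
    moreover have "\<nexists>y. harmonic A B y x" using hv x x0(4) by (auto simp: harm)
    ultimately show "\<exists>x\<in>dom (lif B). (\<nexists>y. harmonic A B y x) \<and> prm A B x = v" using x x0 by (auto simp: lB)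
  qed
  have r1: "(\<exists>x\<in>dom (rif B). prm A B x = v) \<longleftrightarrow> v \<in> nodes (A \<bullet> B) \<and> h v \<in> I2" for v
  proof
    assume "\<exists>x\<in>dom (rif B). prm A B x = v"
    then obtain x where "x \<in> nodes B" "h2 x \<in> I2" "v = prm A B x" by (auto simp: rB' split: if_splits)
    then show "v \<in> nodes (A \<bullet> B) \<and> h v \<in> I2" using prmN[of x] hprm[of x] gB[of x] by simp
  next
    assume vh: "v \<in> nodes (A \<bullet> B) \<and> h v \<in> I2"
    obtain x0 where x0': "x0 \<in> ?U" "v = prm A B x0" "h v = g x0" using nodesG[of v] vh by blast
    then have x0: "x0 \<in> ?U" "v = prm A B x0" "g x0 \<in> I2" using vh by auto
    then obtain x where x: "x \<in> nodes B" "h2 x = g x0" using I2V im2 by force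
    then have "prm A B x = v" using prm_eq[of x x0] x0 gB[of x] by simp
    then show "\<exists>x\<in>dom (rif B). prm A B x = v" using x x0 by (auto simp: rB')
  qed
  have r2: "\<not> (\<exists>x\<in>dom (rif B). prm A B x = v) \<Longrightarrow>
     (\<exists>x\<in>dom (rif A). (\<nexists>y. harmonic A B x y) \<and> prm A B x = v) \<longleftrightarrow> v \<in> nodes (A \<bullet> B) \<and> h v \<in> I1" for v
  proof
    assume "\<exists>x\<in>dom (rif A). (\<nexists>y. harmonic A B x y) \<and> prm A B x = v"
    then obtain x where "x \<in> nodes A" "h1 x \<in> I1" "v = prm A B x" by (auto simp: rA' split: if_splits)
    then show "v \<in> nodes (A \<bullet> B) \<and> h v \<in> I1" using prmN[of x] hprm[of x] gA[of x] by simp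
  next
    assume n1: "\<not> (\<exists>x\<in>dom (rif B). prm A B x = v)" and vh: "v \<in> nodes (A \<bullet> B) \<and> h v \<in> I1"
    then have hv: "h v \<notin> I2" using r1 by blast
    obtain x0 where x0': "x0 \<in> ?U" "v = prm A B x0" "h v = g x0" using nodesG[of v] vh by blast
    then have x0: "x0 \<in> ?U" "v = prm A B x0" "g x0 \<in> I1" "h v = g x0" using vh by auto
    then obtain x where x: "x \<in> nodes A" "h1 x = g x0" using I1V im1 by force
    then have "prm A B x = v" using prm_eq[of x x0] x0 gA[of x] by simp
    moreover have "\<nexists>y. harmonic A B x y" using hv x x0(4) by (auto simp: harm)
    ultimately show "\<exists>x\<in>dom (rif A). (\<nexists>y. harmonic A B x y) \<and> prm A B x = v" using x x0 by (auto simp: rA')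
  qed
  have lifC: "lif (A \<bullet> B) v = (if v \<in> nodes (A \<bullet> B) \<and> h v \<in> I1 \<union> I2 then Some (h v, 1) else None)" for v
  proof -
    have L: "lif (A \<bullet> B) v = (if \<exists>x\<in>dom (lif A). prm A B x = v
        then lif A (SOME x. x \<in> dom (lif A) \<and> prm A B x = v)
        else if \<exists>x\<in>dom (lif B). (\<nexists>y. harmonic A B y x) \<and> prm A B x = v
        then (case lif B (SOME x. x \<in> dom (lif B) \<and> (\<nexists>y. harmonic A B y x) \<and> prm A B x = v) of
                None \<Rightarrow> None
              | Some (l, n) \<Rightarrow> Some (l, card (labelled (lif A) l) + n - mcount A B l))
        else None)" by (simp add: compose_def)
    show ?thesis
    proof (cases "\<exists>x\<in>dom (lif A). prm A B x = v")
      case True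
      define x where "x = (SOME x. x \<in> dom (lif A) \<and> prm A B x = v)"
      have x: "x \<in> dom (lif A)" "prm A B x = v" using someI_ex[of "\<lambda>x. x \<in> dom (lif A) \<and> prm A B x = v"] True
        unfolding x_def by blast+
      then have "x \<in> nodes A" "h1 x \<in> I1" by (auto simp: lA split: if_splits)
      then have "lif A x = Some (h v, 1)" using x hprm gA by (auto simp: lA)
      then show ?thesis using L True c1 unfolding x_def by auto
    next
      case F1: False
      show ?thesis
      proof (cases "\<exists>x\<in>dom (lif B). (\<nexists>y. harmonic A B y x) \<and> prm A B x = v")
        case True
        define x where "x = (SOME x. x \<in> dom (lif B) \<and> (\<nexists>y. harmonic A B y x) \<and> prm A B x = v)"
        have x: "x \<in> dom (lif B)" "prm A B x = v"
          using someI_ex[of "\<lambda>x. x \<in> dom (lif B) \<and> (\<nexists>y. harmonic A B y x) \<and> prm A B x = v"] True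
          unfolding x_def by blast+
        then have "x \<in> nodes B" "h2 x \<in> I2" by (auto simp: lB split: if_splits)
        then have lx: "lif B x = Some (h v, 1)" using x hprm gB by (auto simp: lB)
        have hv: "h v \<notin> I1" and vN: "v \<in> nodes (A \<bullet> B)" "h v \<in> I2" using c1 F1 c2[OF F1] True by blast+
        show ?thesis using L F1 True lx hv vN labA_empty(1)[OF hv] mc1[OF hv] unfolding x_def[symmetric] by simp
      next
        case False
        then show ?thesis using L F1 c1 c2[OF F1] by auto
      qed
    qed
  qed
  have rifC: "rif (A \<bullet> B) v = (if v \<in> nodes (A \<bullet> B) \<and> h v \<in> I1 \<union> I2 then Some (h v, 1) else None)" for v
  proof -
    have L: "rif (A \<bullet> B) v = (if \<exists>x\<in>dom (rif B). prm A B x = v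
        then rif B (SOME x. x \<in> dom (rif B) \<and> prm A B x = v)
        else if \<exists>x\<in>dom (rif A). (\<nexists>y. harmonic A B x y) \<and> prm A B x = v
        then (case rif A (SOME x. x \<in> dom (rif A) \<and> (\<nexists>y. harmonic A B x y) \<and> prm A B x = v) of
                None \<Rightarrow> None
              | Some (l, n) \<Rightarrow> Some (l, card (labelled (rif B) l) + n - mcount A B l))
        else None)" by (simp add: compose_def)
    show ?thesis
    proof (cases "\<exists>x\<in>dom (rif B). prm A B x = v")
      case True
      define x where "x = (SOME x. x \<in> dom (rif B) \<and> prm A B x = v)"
      have x: "x \<in> dom (rif B)" "prm A B x = v" using someI_ex[of "\<lambda>x. x \<in> dom (rif B) \<and> prm A B x = v"] True
        unfolding x_def by blast+
      then have "x \<in> nodes B" "h2 x \<in> I2" by (auto simp: rB' split: if_splits)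
      then have "rif B x = Some (h v, 1)" using x hprm gB by (auto simp: rB')
      then show ?thesis using L True r1 unfolding x_def by auto
    next
      case F1: False
      show ?thesis
      proof (cases "\<exists>x\<in>dom (rif A). (\<nexists>y. harmonic A B x y) \<and> prm A B x = v")
        case True
        define x where "x = (SOME x. x \<in> dom (rif A) \<and> (\<nexists>y. harmonic A B x y) \<and> prm A B x = v)"
        have x: "x \<in> dom (rif A)" "prm A B x = v"
          using someI_ex[of "\<lambda>x. x \<in> dom (rif A) \<and> (\<nexists>y. harmonic A B x y) \<and> prm A B x = v"] True
          unfolding x_def by blast+
        then have "x \<in> nodes A" "h1 x \<in> I1" by (auto simp: rA' split: if_splits)
        then have lx: "rif A x = Some (h v, 1)" using x hprm gA by (auto simp: rA')
        have hv: "h v \<notin> I2" and vN: "v \<in> nodes (A \<bullet> B)" "h v \<in> I1" using r1 F1 r2[OF F1] True by blast+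
        show ?thesis using L F1 True lx hv vN labB_empty(2)[OF hv] mc2[OF hv] unfolding x_def[symmetric] by simp
      next
        case False
        then show ?thesis using L F1 r1 r2[OF F1] by auto
      qed
    qed
  qed
  have "rep (A \<bullet> B) h (V1 \<union> V2) (E1 \<union> E2) (I1 \<union> I2)"
    unfolding rep_def using bh edgesub edgeim lifC rifC by blast
  then show ?thesis by blast
qed



lemma trans_atom_tmod: "trans_atom F t = tmod (preset F t \<union> postset F t \<union> {t})
   ((preset F t \<times> {t}) \<union> ({t} \<times> postset F t)) (preset F t \<union> postset F t)"
  by (simp add: trans_atom_def tmod_def Let_def)

lemma net_module_tmod: "net_module P T F = tmod (P \<union> T) F P"
  by (simp add: net_module_def tmod_def)

theorem mainTheorem2:
  fixes P T :: "'x set" and F :: "('x \<times> 'x) set"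
    and n :: nat and t :: "nat \<Rightarrow> 'x"
    and A C :: "nat \<Rightarrow> ('a node, 'x) pmodule"
  assumes "is_net P T F" and "finite P" and "finite T"
    and "no_isolated P T F"
    and "bij_betw t {1..n} T"
    and "A 0 = empty_module"
    and "\<And>i. i \<in> {1..n} \<Longrightarrow> mod_iso (C i) (trans_atom F (t i))"
    and "\<And>i. i \<in> {1..n} \<Longrightarrow> nodes (C i) \<inter> nodes (A (i - 1)) = {}"
    and "\<And>i. i \<in> {1..n} \<Longrightarrow> A i = A (i - 1) \<bullet> C i"
  shows "mod_iso (A n) (net_module P T F)"
proof -
  note net = assms(1) and finP = assms(2) and finT = assms(3) and noi = assms(4)
    and bt = assms(5) and A0 = assms(6) and Ciso = assms(7) and Cdisj = assms(8) and Astep = assms(9)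
  have PT: "P \<inter> T = {}" and FPT: "F \<subseteq> (P \<times> T) \<union> (T \<times> P)" using net by (auto simp: is_net_def)
  define Tk where "Tk k = t ` {1..k}" for k
  define Fk where "Fk k = {(a, b) \<in> F. a \<in> Tk k \<or> b \<in> Tk k}" for k
  define Pk where "Pk k = {p. \<exists>s\<in>Tk k. (p, s) \<in> F \<or> (s, p) \<in> F}" for k
  have TkT: "k \<le> n \<Longrightarrow> Tk k \<subseteq> T" for k using bt by (auto simp: Tk_def bij_betw_def)
  have adjP: "s \<in> T \<Longrightarrow> (p, s) \<in> F \<or> (s, p) \<in> F \<Longrightarrow> p \<in> P" for s p
    using FPT PT by auto
  have PkP: "k \<le> n \<Longrightarrow> Pk k \<subseteq> P" for k using TkT adjP by (auto simp: Pk_def)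
  have main: "k \<le> n \<Longrightarrow> \<exists>h. rep (A k) h (Pk k \<union> Tk k) (Fk k) (Pk k)" for k
  proof (induction k)
    case 0
    have "Tk 0 = {}" "Pk 0 = {}" "Fk 0 = {}" by (auto simp: Tk_def Pk_def Fk_def)
    then show ?case using A0 by (simp add: rep_def empty_module_def bij_betw_def)
  next
    case (Suc j)
    let ?i = "Suc j"
    have iN: "?i \<in> {1..n}" using Suc.prems by auto
    obtain h1 where r1: "rep (A j) h1 (Pk j \<union> Tk j) (Fk j) (Pk j)" using Suc by auto
    let ?pre = "preset F (t ?i)" and ?post = "postset F (t ?i)"
    obtain h2 where r2: "rep (C ?i) h2 (?pre \<union> ?post \<union> {t ?i}) ((?pre \<times> {t ?i}) \<union> ({t ?i} \<times> ?post)) (?pre \<union> ?post)"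
      using iso_rep Ciso[OF iN] trans_atom_tmod by metis
    have tiT: "t ?i \<in> T" using bt iN by (auto simp: bij_betw_def)
    have ppP: "?pre \<union> ?post \<subseteq> P" using adjP tiT by (auto simp: preset_def postset_def)
    have tinj: "t ?i \<notin> Tk j"
    proof
      assume "t ?i \<in> Tk j"
      then obtain k where "k \<in> {1..j}" "t k = t ?i" by (auto simp: Tk_def)
      moreover have "inj_on t {1..n}" using bt by (simp add: bij_betw_def)
      ultimately show False using iN by (auto dest: inj_onD)
    qed
    have share: "(Pk j \<union> Tk j) \<inter> (?pre \<union> ?post \<union> {t ?i}) \<subseteq> Pk j \<inter> (?pre \<union> ?post)"
    proof
      fix x assume x: "x \<in> (Pk j \<union> Tk j) \<inter> (?pre \<union> ?post \<union> {t ?i})"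
      have "x \<noteq> t ?i" using x tinj PkP[of j] Suc.prems PT tiT by auto
      then have xp: "x \<in> ?pre \<union> ?post" using x by auto
      then have "x \<notin> Tk j" using ppP TkT[of j] Suc.prems PT by auto
      then show "x \<in> Pk j \<inter> (?pre \<union> ?post)" using x xp by auto
    qed
    have fin1: "finite (Pk j \<union> Tk j)" using PkP[of j] Suc.prems finP finite_subset by (auto simp: Tk_def)
    have fin2: "finite (?pre \<union> ?post \<union> {t ?i})" using ppP finP finite_subset by auto
    have disj: "nodes (A j) \<inter> nodes (C ?i) = {}" using Cdisj[OF iN] by auto
    obtain h where r: "rep (A j \<bullet> C ?i) h ((Pk j \<union> Tk j) \<union> (?pre \<union> ?post \<union> {t ?i}))
         (Fk j \<union> ((?pre \<times> {t ?i}) \<union> ({t ?i} \<times> ?post))) (Pk j \<union> (?pre \<union> ?post))"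
      using compose_rep[OF r1 r2 fin1 fin2 _ _ disj share] by auto
    have Ti: "Tk ?i = insert (t ?i) (Tk j)" by (auto simp: Tk_def atLeastAtMostSuc_conv)
    have Pi: "Pk ?i = Pk j \<union> (?pre \<union> ?post)"
      unfolding Pk_def Ti by (auto simp: preset_def postset_def)
    have Fi: "Fk ?i = Fk j \<union> ((?pre \<times> {t ?i}) \<union> ({t ?i} \<times> ?post))"
      unfolding Fk_def Ti by (auto simp: preset_def postset_def)
    have Vi: "Pk ?i \<union> Tk ?i = (Pk j \<union> Tk j) \<union> (?pre \<union> ?post \<union> {t ?i})"
      using Pi Ti by auto
    have "A ?i = A j \<bullet> C ?i" using Astep[OF iN] by simp
    then show ?case using r Vi Fi Pi by metis
  qed
  obtain h where r: "rep (A n) h (Pk n \<union> Tk n) (Fk n) (Pk n)" using main by blast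
  have Tn: "Tk n = T" using bt by (simp add: Tk_def bij_betw_def)
  have Fn: "Fk n = F" using FPT by (auto simp: Fk_def Tn)
  have Pn: "Pk n = P"
  proof
    show "Pk n \<subseteq> P" using PkP by simp
    show "P \<subseteq> Pk n"
    proof
      fix p assume p: "p \<in> P"
      then obtain y where "(p, y) \<in> F \<or> (y, p) \<in> F" using noi by (auto simp: no_isolated_def)
      moreover then have "y \<in> T" using FPT PT p by auto
      ultimately show "p \<in> Pk n" by (auto simp: Pk_def Tn)
    qed
  qed
  have "mod_iso (A n) (tmod (P \<union> T) F P)"
    using rep_iso[of "A n" h "P \<union> T" F P] r Tn Fn Pn finP finT FPT by auto
  then show ?thesis by (simp add: net_module_tmod)
qed


end
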